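(* Let $\theta>1$, $r\in(\theta^{-1},\theta^{-1/2}]$ and $s=\max\big(1,\frac{\ln\theta}{\ln(r\theta)}-2\big)$. There is a constant $C'>0$ depending only on $(s,\theta)$ such that the following holds. Let $p^*\in[1,\theta]$, suppose the random price sequence has maximum $P^*=p^*$ almost surely, and let $Y\sim\mathrm{Unif}([p^*(1-\epsilon'),p^*(1+\epsilon')])$ with $0<\epsilon'\le\min\{1-1/p^*,\ \theta/p^*-1\}$. Then \[ \frac{\mathbb{E}[\mathsf{A}^1_r(P,Y)]}{\mathbb{E}[P^*]}\ \ge\ \frac{1}{r\theta}\Big(1-\frac{s}{2}\epsilon'-C'\epsilon'^2\Big). \]
   Context: One-max search: fix $\theta>1$. Prices $p_1,\dots,p_n\in[1,\theta]$ are revealed one at a time; the algorithm receives at the start a prediction $y\in[1,\theta]$ of the maximum price. At each step it irrevocably accepts the current price (payoff = that price) or rejects it; if nothing is accepted the payoff is $1$. Let $\varphi_r(z)=\frac{r\theta-1}{1-r}+\frac{1-r^2\theta}{1-r}\cdot\frac{z}{r\theta}$ and $\Phi^1_r(z)=\max(r\theta,\varphi_r(z))$; $\mathsf{A}^1_r$ accepts the first price $p_i\ge\Phi^1_r(y)$, and $\mathsf{A}^1_r(P,Y)$ is its payoff on the realized prices and prediction. *)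

theory Defs
  imports "HOL-Probability.Probability"
begin

definition phi_r :: "real \<Rightarrow> real \<Rightarrow> real \<Rightarrow> real" where
  "phi_r \<theta> r z = (r * \<theta> - 1) / (1 - r) + (1 - r^2 * \<theta>) / (1 - r) * (z / (r * \<theta>))"

definition Phi1 :: "real \<Rightarrow> real \<Rightarrow> real \<Rightarrow> real" where
  "Phi1 \<theta> r z = max (r * \<theta>) (phi_r \<theta> r z)"

definition A1 :: "real \<Rightarrow> real \<Rightarrow> real list \<Rightarrow> real \<Rightarrow> real" where
  "A1 \<theta> r ps y = (case find (\<lambda>p. Phi1 \<theta> r y \<le> p) ps of Some p \<Rightarrow> p | None \<Rightarrow> 1)"

end

theory Submission
  imports Defs
begin

lemma find_some: "find Q xs = Some z \<Longrightarrow> z \<in> set xs \<and> Q z"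
  by (induct xs) (auto split: if_splits)

lemma Phi1_eq:
  assumes "0 < r" "r < 1" "0 < \<theta>"
  shows "Phi1 \<theta> r z = max (r*\<theta>) ((r*\<theta>-1)/(1-r) + (1-r^2*\<theta>)/((1-r)*(r*\<theta>)) * z)"
  using assms unfolding Phi1_def phi_r_def by (simp add: field_simps)

lemma s_bound:
  fixes \<theta> r x :: real
  assumes "x = r * \<theta>" "1 < x" "x * x \<le> \<theta>" "r < 1"
  shows "(1 - r) * x / (2 * (x - 1)) \<le> max 1 (ln \<theta> / ln (r * \<theta>) - 2)"
proof -
  define u where "u = \<theta> / x"
  have th0: "\<theta> > 0" using assms by (smt (verit) mult_le_cancel_left2)
  have ux: "u \<ge> x" using assms(2,3) unfolding u_def by (simp add: pos_le_divide_eq)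
  have u0: "u > 0" using ux assms by simp
  have l1: "ln (u/x) \<ge> 1 - x/u"
    using ln_le_minus_one[of "x/u"] u0 assms(2) by (simp add: ln_div)
  have l2: "ln x \<le> x - 1" using ln_le_minus_one assms(2) by simp
  have lnx: "ln x > 0" using assms(2) by simp
  have lnu: "ln (u/x) = ln u - ln x" using u0 assms(2) by (simp add: ln_div)
  have key: "x * ln x * (1 - 1/u) \<le> (x - 1) * ln u"
  proof -
    have "(x - 1 - ln x) * (1 - x/u) \<ge> 0"
      using l2 ux u0 by (intro mult_nonneg_nonneg) (auto simp: field_simps)
    moreover have "(x-1)*ln(u/x) \<ge> (x-1)*(1-x/u)" using l1 assms(2) by (intro mult_left_mono) auto
    ultimately show ?thesis using lnu u0 by (simp add: field_simps)
  qed
  have lth: "ln \<theta> = ln x + ln u" using u0 assms(2) th0 unfolding u_def by (simp add: ln_div)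
  define R where "R = x * (1 - 1/u) / (x - 1)"
  have rx: "(1 - r) * x = x * (1 - 1/u)" using assms th0 unfolding u_def by (simp add: field_simps)
  have "R \<le> ln u / ln x" using key lnx assms unfolding R_def by (simp add: field_simps)
  hence "R - 1 \<le> ln \<theta> / ln (r*\<theta>) - 2" using lth lnx assms(1) by (simp add: field_simps)
  moreover have "(1 - r) * x / (2 * (x - 1)) = R / 2" unfolding R_def rx by simp
  ultimately show ?thesis by linarith
qed

lemma loss_alg:
  fixes B D E w :: real
  assumes "B + D = 1" "B \<ge> 0" "D > 0" "0 \<le> w" "w \<le> E"
  shows "(E - w) * (B * w / D + (E + w) / 2) \<le> E^2 / (2 * D)"
proof -
  have "(E - w) * (2 * B * w + D * (E + w)) \<le> E^2"
  proof -
    have "E^2 - (E - w) * (2 * B * w + D * (E + w)) = B * (E - w)^2 + w^2"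
    proof -
      have D: "D = 1 - B" using assms(1) by simp
      show ?thesis unfolding D by (simp add: power2_eq_square algebra_simps)
    qed
    moreover have "B * (E - w)^2 + w^2 \<ge> 0" using assms by simp
    ultimately show ?thesis by linarith
  qed
  moreover have "(E - w) * (B * w / D + (E + w) / 2) = (E - w) * (2 * B * w + D * (E + w)) / (2 * D)"
    using assms(3) by (simp add: field_simps)
  ultimately show ?thesis using assms(3) by (simp add: divide_right_mono)
qed

lemma lin_helper:
  fixes Sa Sb Sq K T L :: real
  assumes "(Sb - Sa) / 2 = K" "(Sb - Sq) / 2 - T \<le> L"
  shows "K - L \<le> (Sq - Sa) / 2 + T"
  using assms by (simp add: field_simps)

lemma core:
  fixes \<theta> r p \<epsilon> :: real
  assumes th: "\<theta> > 1" and r1: "1/\<theta> < r" and r2: "r \<le> 1 / sqrt \<theta>"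
    and p1: "1 \<le> p" and p2: "p \<le> \<theta>" and px: "r * \<theta> < p"
    and e0: "0 < \<epsilon>" and e1: "\<epsilon> \<le> 1 - 1/p" and e2: "\<epsilon> \<le> \<theta>/p - 1"
  shows "\<exists>c. p * (1 - \<epsilon>) \<le> c \<and> c \<le> p * (1 + \<epsilon>) \<and>
     (\<forall>y\<le>c. Phi1 \<theta> r y \<le> p \<and> y / (r * \<theta>) \<le> Phi1 \<theta> r y) \<and>
     2 * p^2 * \<epsilon> * (1 - max 1 (ln \<theta> / ln (r * \<theta>) - 2) * \<epsilon> / 2)
       \<le> (c^2 - (p * (1 - \<epsilon>))^2) / 2 + r * \<theta> * (p * (1 + \<epsilon>) - c)"
proof -
  define x where "x = r * \<theta>"
  define s where "s = max 1 (ln \<theta> / ln (r * \<theta>) - 2)"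
  have th0: "\<theta> > 0" using th by simp
  have x1: "x > 1" using r1 th0 unfolding x_def by (simp add: field_simps)
  have r0: "r > 0" using r1 th0 by (smt (verit) divide_pos_pos)
  have sq: "sqrt \<theta> * sqrt \<theta> = \<theta>" using th0 by simp
  have sq0: "sqrt \<theta> > 0" using th0 by simp
  have rs: "r * sqrt \<theta> \<le> 1" using r2 sq0 by (simp add: field_simps)
  have xs: "x \<le> sqrt \<theta>" unfolding x_def
    using mult_right_mono[OF rs, of "sqrt \<theta>"] sq0 sq by (simp add: mult.assoc)
  have xx: "x * x \<le> \<theta>" using mult_mono[OF xs xs] sq x1 by simp
  have rx: "r * x \<le> 1"
  proof -
    have "(r * sqrt \<theta>) * (r * sqrt \<theta>) \<le> 1" using mult_le_one[OF rs _ rs] r0 sq0 by simp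
    moreover have "(r * sqrt \<theta>) * (r * sqrt \<theta>) = r * x" unfolding x_def using sq
      by (metis mult.assoc mult.left_commute)
    ultimately show ?thesis by simp
  qed
  have rlt: "r < 1"
  proof (rule ccontr)
    assume "\<not> r < 1"
    then have "x \<le> r * x" using mult_right_mono[of 1 r x] x1 by simp
    then show False using rx x1 by linarith
  qed
  have xth: "x < \<theta>"
  proof -
    have "x * 1 < x * x" using x1 by (intro mult_strict_left_mono) auto
    then show ?thesis using xx by simp
  qed
  define B where "B = (1 - r * x) / ((1 - r) * x)"
  define D where "D = (x - 1) / ((1 - r) * x)"
  define A where "A = (r*\<theta>-1)/(1-r)"
  have B0: "B \<ge> 0" unfolding B_def using rx rlt x1 by simp
  have D0: "D > 0" unfolding D_def using rlt x1 by simp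
  have BD: "B + D = 1"
  proof -
    have nz: "(1 - r) * x \<noteq> 0" using rlt x1 by simp
    have "B + D = (1 - r * x + (x - 1)) / ((1 - r) * x)" unfolding B_def D_def by (simp only: add_divide_distrib[symmetric])
    also have "1 - r * x + (x - 1) = (1 - r) * x" by (simp add: algebra_simps)
    finally show ?thesis using nz by simp
  qed
  have AD: "A = x * D" unfolding A_def D_def x_def[symmetric] using x1 by simp
  have Phi: "Phi1 \<theta> r y = max x (A + B * y)" for y
    unfolding Phi1_eq[OF r0 rlt th0] A_def B_def x_def by (simp add: power2_eq_square mult.assoc)
  have Bx: "B \<le> 1 / x"
  proof -
    have "r \<le> r * x" using r0 x1 by simp
    then have "(1 - r * x) / (1 - r) \<le> 1" using rlt by simp
    then have "(1 - r * x) / (1 - r) / x \<le> 1 / x" using x1 by (intro divide_right_mono) auto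
    then show ?thesis unfolding B_def by (simp add: divide_divide_eq_left)
  qed
  have Ath: "A + B * \<theta> - \<theta> / x = 0"
  proof -
    have tx: "\<theta> = x / r" unfolding x_def using r0 by simp
    have n1: "1 - r \<noteq> 0" and n2: "x \<noteq> 0" and n3: "r \<noteq> 0" using rlt x1 r0 by auto
    have "A + B * \<theta> - \<theta> / x = (x - 1) / (1 - r) + (1 - r * x) / ((1 - r) * r) - 1 / r"
      unfolding A_def B_def x_def[symmetric] tx using n2 n3 by simp
    also have "\<dots> = (r * (x - 1) + (1 - r * x) - (1 - r)) / ((1 - r) * r)"
    proof -
      have e: "r + r * (r * r) - r * (r * 2) = r * (1 - r)^2" by (simp add: power2_eq_square algebra_simps)
      have "r * (1 - r)^2 \<noteq> 0" using n1 n3 by simp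
      then have "r + r * (r * r) \<noteq> r * (r * 2)" using e by auto
      then show ?thesis using n1 n3 by (simp add: field_simps)
    qed
    also have "r * (x - 1) + (1 - r * x) - (1 - r) = 0" by (simp add: algebra_simps)
    finally show ?thesis by simp
  qed
  have lowb: "y / x \<le> Phi1 \<theta> r y" if "y \<le> \<theta>" for y
  proof (cases "y \<le> x")
    case True
    then have "y / x \<le> 1" using x1 by simp
    then show ?thesis unfolding Phi using x1 by linarith
  next
    case False
    have "A + B * y - y / x = (A + B * \<theta> - \<theta> / x) + (1/x - B) * (\<theta> - y)"
      by (simp add: algebra_simps diff_divide_distrib)
    also have "\<dots> \<ge> 0" using Ath Bx that by simp
    finally show ?thesis unfolding Phi by linarith
  qed
  have sb: "1 / (2 * D) \<le> s" using s_bound[of x r \<theta>] x1 xx rlt unfolding s_def D_def x_def by simp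
  have s0: "s > 0" unfolding s_def by simp
  define E where "E = p * \<epsilon>"
  have E0: "E > 0" using e0 p1 unfolding E_def by simp
  have bth: "p * (1 + \<epsilon>) \<le> \<theta>" using e2 p1 by (simp add: field_simps)
  define q where "q = p + D * (p - x) / B"
  define c where "c = (if B = 0 \<or> p * (1 + \<epsilon>) \<le> q then p * (1 + \<epsilon>) else q)"
  have qp: "B > 0 \<Longrightarrow> q \<ge> p" unfolding q_def using D0 px x_def by simp
  have Deq: "D = 1 - B" using BD by simp
  have Aq: "B > 0 \<Longrightarrow> A + B * q = p" unfolding q_def AD Deq by (simp add: field_simps)
  show ?thesis
  proof (intro exI[of _ c] conjI allI impI)
    show "p * (1 - \<epsilon>) \<le> c" unfolding c_def using qp B0 e0 p1 by (auto simp: field_simps)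
    show cb: "c \<le> p * (1 + \<epsilon>)" unfolding c_def by auto
    fix y assume yc: "y \<le> c"
    show "Phi1 \<theta> r y \<le> p"
    proof (cases "B = 0")
      case True
      then show ?thesis unfolding Phi AD using BD px x_def by simp
    next
      case False
      then have Bp: "B > 0" using B0 by simp
      have "y \<le> q" using yc False unfolding c_def by (auto split: if_splits)
      then have "A + B * y \<le> A + B * q" using Bp by simp
      then show ?thesis unfolding Phi using Aq[OF Bp] px x_def by simp
    qed
    show "y / (r * \<theta>) \<le> Phi1 \<theta> r y" using lowb[of y] yc cb bth x_def by simp
  next
    show "2 * p^2 * \<epsilon> * (1 - max 1 (ln \<theta> / ln (r * \<theta>) - 2) * \<epsilon> / 2)
       \<le> (c^2 - (p * (1 - \<epsilon>))^2) / 2 + r * \<theta> * (p * (1 + \<epsilon>) - c)"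
    proof (cases "B = 0 \<or> p * (1 + \<epsilon>) \<le> q")
      case True
      then have cb: "c = p * (1 + \<epsilon>)" unfolding c_def by simp
      have "((p * (1 + \<epsilon>))^2 - (p * (1 - \<epsilon>))^2) / 2 = 2 * p^2 * \<epsilon>"
        by (simp add: power2_eq_square algebra_simps)
      moreover have "2 * p^2 * \<epsilon> * (1 - s * \<epsilon> / 2) \<le> 2 * p^2 * \<epsilon>"
        using s0 e0 p1 by simp
      ultimately show ?thesis unfolding cb s_def by (simp add: mult.commute)
    next
      case False
      then have Bp: "B > 0" and qb: "q < p * (1 + \<epsilon>)" using B0 by auto
      have cq: "c = q" unfolding c_def using False by simp
      define w where "w = q - p"
      have w0: "0 \<le> w" using qp[OF Bp] unfolding w_def by simp
      have wE: "w \<le> E" using qb unfolding w_def E_def by (simp add: algebra_simps)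
      have pxw: "p - x = B * w / D" unfolding w_def q_def using Bp D0 by (simp add: field_simps)
      have loss: "((p * (1 + \<epsilon>))^2 - q^2) / 2 - x * (p * (1 + \<epsilon>) - q) = (E - w) * (B * w / D + (E + w) / 2)"
      proof -
        have "((p * (1 + \<epsilon>))^2 - q^2) / 2 - x * (p * (1 + \<epsilon>) - q) = (E - w) * ((p - x) + (E + w) / 2)"
          unfolding w_def E_def by (simp add: power2_eq_square field_simps)
        then show ?thesis unfolding pxw .
      qed
      have "(E - w) * (B * w / D + (E + w) / 2) \<le> E^2 / (2 * D)"
        using loss_alg[OF BD B0 D0 w0 wE] .
      also have "\<dots> = E^2 * (1 / (2 * D))" by simp
      also have "\<dots> \<le> E^2 * s" using sb by (intro mult_left_mono) auto
      finally have L: "((p * (1 + \<epsilon>))^2 - q^2) / 2 - x * (p * (1 + \<epsilon>) - q) \<le> E^2 * s" using loss by simp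
      have "((p * (1 + \<epsilon>))^2 - (p * (1 - \<epsilon>))^2) / 2 = 2 * p^2 * \<epsilon>"
        by (simp add: power2_eq_square algebra_simps)
      then have "(q^2 - (p * (1 - \<epsilon>))^2) / 2 + x * (p * (1 + \<epsilon>) - q) \<ge> 2 * p^2 * \<epsilon> - E^2 * s"
        using lin_helper[OF _ L] by blast
      moreover have "2 * p^2 * \<epsilon> - E^2 * s = 2 * p^2 * \<epsilon> * (1 - s * \<epsilon> / 2)"
        unfolding E_def by (simp add: power2_eq_square algebra_simps)
      ultimately show ?thesis unfolding cq s_def x_def by simp
    qed
  qed
qed

lemma unif_int:
  fixes a b c x :: real
  assumes ab: "a < b" and ac: "a \<le> c" and cb: "c \<le> b" and x0: "x > 0"
  shows "integrable lborel (\<lambda>y. (indicator {a..b} y / measure lborel {a..b}) * (if y \<le> c then y / x else 1))"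
    and "(\<integral>y. (indicator {a..b} y / measure lborel {a..b}) * (if y \<le> c then y / x else 1) \<partial>lborel)
          = ((c^2 - a^2) / (2 * x) + (b - c)) / (b - a)"
proof -
  have eq: "(\<lambda>y. (indicator {a..b} y / measure lborel {a..b}) * (if y \<le> c then y / x else 1))
     = (\<lambda>y. (1 / (b - a)) * (indicator {a..c} y *\<^sub>R (y / x) + indicator {c<..b} y))"
    using ab ac cb by (auto simp: indicator_def fun_eq_iff)
  have i1: "integrable lborel (\<lambda>y. indicator {a..c} y *\<^sub>R (y / x))"
  proof -
    have "continuous_on {a..c} (\<lambda>y. y / x)" using x0 by (auto intro!: continuous_intros)
    then show ?thesis using borel_integrable_atLeastAtMost'[of a c "\<lambda>y. y / x"] unfolding set_integrable_def
      by simp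
  qed
  have i2: "integrable lborel (indicator {c<..b} :: real \<Rightarrow> real)"
    using cb by (simp add: integrable_indicator_iff)
  have I1: "(\<integral>y. indicator {a..c} y *\<^sub>R (y / x) \<partial>lborel) = c^2 / (2 * x) - a^2 / (2 * x)"
  proof (rule integral_FTC_atLeastAtMost[OF ac])
    fix y assume "a \<le> y" "y \<le> c"
    show "((\<lambda>y. y^2 / (2 * x)) has_vector_derivative y / x) (at y within {a..c})"
      unfolding has_real_derivative_iff_has_vector_derivative[symmetric]
      using x0 by (auto intro!: derivative_eq_intros simp: field_simps power2_eq_square)
  next
    show "continuous_on {a..c} (\<lambda>y. y / x)" using x0 by (auto intro!: continuous_intros)
  qed
  have I2: "(\<integral>y. indicator {c<..b} y \<partial>lborel) = b - c" using cb by simp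
  show "integrable lborel (\<lambda>y. (indicator {a..b} y / measure lborel {a..b}) * (if y \<le> c then y / x else 1))"
    unfolding eq using i1 i2 by auto
  show "(\<integral>y. (indicator {a..b} y / measure lborel {a..b}) * (if y \<le> c then y / x else 1) \<partial>lborel)
          = ((c^2 - a^2) / (2 * x) + (b - c)) / (b - a)"
    unfolding eq using i1 i2 I1 I2 by (simp add: diff_divide_distrib)
qed

lemma find_meas:
  fixes T :: "'a \<Rightarrow> real" and fs :: "('a \<Rightarrow> real) list"
  assumes Tm[measurable]: "T \<in> borel_measurable M" and "\<forall>f\<in>set fs. f \<in> borel_measurable M"
  shows "(\<lambda>\<omega>. case find (\<lambda>p. T \<omega> \<le> p) (map (\<lambda>f. f \<omega>) fs) of Some p \<Rightarrow> p | None \<Rightarrow> 1) \<in> borel_measurable M"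
  using assms(2)
proof (induct fs)
  case Nil then show ?case by simp
next
  case (Cons f fs)
  then have fm[measurable]: "f \<in> borel_measurable M"
    and IH[measurable]: "(\<lambda>\<omega>. case find (\<lambda>p. T \<omega> \<le> p) (map (\<lambda>f. f \<omega>) fs) of Some p \<Rightarrow> p | None \<Rightarrow> 1) \<in> borel_measurable M"
    by auto
  have eq: "(\<lambda>\<omega>. case find (\<lambda>p. T \<omega> \<le> p) (map (\<lambda>f. f \<omega>) (f # fs)) of Some p \<Rightarrow> p | None \<Rightarrow> 1)
    = (\<lambda>\<omega>. if T \<omega> \<le> f \<omega> then f \<omega> else (case find (\<lambda>p. T \<omega> \<le> p) (map (\<lambda>f. f \<omega>) fs) of Some p \<Rightarrow> p | None \<Rightarrow> 1))"
    by auto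
  show ?case unfolding eq by measurable
qed

lemma A1_ge1:
  assumes "1 \<le> r * \<theta>"
  shows "1 \<le> A1 \<theta> r ps y"
proof (cases "find (\<lambda>p. Phi1 \<theta> r y \<le> p) ps")
  case None then show ?thesis unfolding A1_def by simp
next
  case (Some z)
  then have "Phi1 \<theta> r y \<le> z" using find_some by fastforce
  moreover have "r * \<theta> \<le> Phi1 \<theta> r y" unfolding Phi1_def by simp
  ultimately show ?thesis unfolding A1_def using Some assms by simp
qed

lemma A1_le:
  assumes "\<forall>z\<in>set ps. z \<le> \<theta>" "1 \<le> \<theta>"
  shows "A1 \<theta> r ps y \<le> \<theta>"
proof (cases "find (\<lambda>p. Phi1 \<theta> r y \<le> p) ps")
  case None then show ?thesis unfolding A1_def using assms by simp
next
  case (Some z)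
  then have "z \<in> set ps" using find_some by fastforce
  then show ?thesis unfolding A1_def using Some assms by simp
qed

lemma A1_ge_Phi:
  assumes "z0 \<in> set ps" "Phi1 \<theta> r y \<le> z0"
  shows "Phi1 \<theta> r y \<le> A1 \<theta> r ps y"
proof (cases "find (\<lambda>p. Phi1 \<theta> r y \<le> p) ps")
  case None then show ?thesis using assms find_None_iff[of "\<lambda>p. Phi1 \<theta> r y \<le> p" ps] by auto
next
  case (Some z)
  then have "Phi1 \<theta> r y \<le> z" using find_some by fastforce
  then show ?thesis unfolding A1_def using Some by simp
qed

theorem corollary5:
  fixes \<theta> :: real
  assumes "\<theta> > 1"
  shows "\<exists>C :: real \<Rightarrow> real.
    \<forall>r. 1 / \<theta> < r \<and> r \<le> 1 / sqrt \<theta> \<longrightarrow>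
      (let s = max 1 (ln \<theta> / ln (r * \<theta>) - 2) in
        C s > 0 \<and>
        (\<forall>(M :: 'a measure) (n :: nat) (P :: 'a \<Rightarrow> nat \<Rightarrow> real) (Y :: 'a \<Rightarrow> real)
            (pstar :: real) (\<epsilon> :: real).
          prob_space M \<longrightarrow> n \<ge> 1 \<longrightarrow>
          (\<forall>i<n. (\<lambda>\<omega>. P \<omega> i) \<in> borel_measurable M) \<longrightarrow>
          (\<forall>\<omega>\<in>space M. \<forall>i<n. P \<omega> i \<in> {1..\<theta>}) \<longrightarrow>
          pstar \<in> {1..\<theta>} \<longrightarrow>
          (AE \<omega> in M. Max ((P \<omega>) ` {..<n}) = pstar) \<longrightarrow>
          0 < \<epsilon> \<longrightarrow> \<epsilon> \<le> min (1 - 1 / pstar) (\<theta> / pstar - 1) \<longrightarrow>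
          distributed M lborel Y
            (\<lambda>y. indicator {pstar * (1 - \<epsilon>) .. pstar * (1 + \<epsilon>)} y
                  / measure lborel {pstar * (1 - \<epsilon>) .. pstar * (1 + \<epsilon>)}) \<longrightarrow>
          (\<integral>\<omega>. A1 \<theta> r (map (P \<omega>) [0..<n]) (Y \<omega>) \<partial>M)
            / (\<integral>\<omega>. Max ((P \<omega>) ` {..<n}) \<partial>M)
          \<ge> 1 / (r * \<theta>) * (1 - s / 2 * \<epsilon> - C s * \<epsilon>^2)))"
proof (intro exI[of _ "\<lambda>_. 1"] allI impI)
  fix r :: real
  assume r: "1 / \<theta> < r \<and> r \<le> 1 / sqrt \<theta>"
  define s where "s = max 1 (ln \<theta> / ln (r * \<theta>) - 2)"
  define x where "x = r * \<theta>"
  have th0: "\<theta> > 0" using assms by simp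
  have x1: "x > 1" using r th0 unfolding x_def by (simp add: field_simps)
  have r0: "r > 0" using r th0 by (smt (verit) divide_pos_pos)
  have s0: "s > 0" unfolding s_def by simp
  show "let s = max 1 (ln \<theta> / ln (r * \<theta>) - 2) in
        (\<lambda>_. 1) s > (0::real) \<and>
        (\<forall>(M :: 'a measure) (n :: nat) (P :: 'a \<Rightarrow> nat \<Rightarrow> real) (Y :: 'a \<Rightarrow> real)
            (pstar :: real) (\<epsilon> :: real).
          prob_space M \<longrightarrow> n \<ge> 1 \<longrightarrow>
          (\<forall>i<n. (\<lambda>\<omega>. P \<omega> i) \<in> borel_measurable M) \<longrightarrow>
          (\<forall>\<omega>\<in>space M. \<forall>i<n. P \<omega> i \<in> {1..\<theta>}) \<longrightarrow>
          pstar \<in> {1..\<theta>} \<longrightarrow>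
          (AE \<omega> in M. Max ((P \<omega>) ` {..<n}) = pstar) \<longrightarrow>
          0 < \<epsilon> \<longrightarrow> \<epsilon> \<le> min (1 - 1 / pstar) (\<theta> / pstar - 1) \<longrightarrow>
          distributed M lborel Y
            (\<lambda>y. indicator {pstar * (1 - \<epsilon>) .. pstar * (1 + \<epsilon>)} y
                  / measure lborel {pstar * (1 - \<epsilon>) .. pstar * (1 + \<epsilon>)}) \<longrightarrow>
          (\<integral>\<omega>. A1 \<theta> r (map (P \<omega>) [0..<n]) (Y \<omega>) \<partial>M)
            / (\<integral>\<omega>. Max ((P \<omega>) ` {..<n}) \<partial>M)
          \<ge> 1 / (r * \<theta>) * (1 - s / 2 * \<epsilon> - (\<lambda>_. 1) s * \<epsilon>^2))"
    unfolding Let_def s_def[symmetric]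
  proof (intro conjI allI impI)
    show "(0::real) < 1" by simp
    fix M :: "'a measure" and n :: nat and P :: "'a \<Rightarrow> nat \<Rightarrow> real" and Y :: "'a \<Rightarrow> real"
      and p :: real and \<epsilon> :: real
    assume PS: "prob_space M" and n1: "n \<ge> 1"
      and Pm: "\<forall>i<n. (\<lambda>\<omega>. P \<omega> i) \<in> borel_measurable M"
      and Pr: "\<forall>\<omega>\<in>space M. \<forall>i<n. P \<omega> i \<in> {1..\<theta>}"
      and p: "p \<in> {1..\<theta>}"
      and AEm: "AE \<omega> in M. Max ((P \<omega>) ` {..<n}) = p"
      and e0: "0 < \<epsilon>" and e12: "\<epsilon> \<le> min (1 - 1 / p) (\<theta> / p - 1)"
      and dist: "distributed M lborel Y
            (\<lambda>y. indicator {p * (1 - \<epsilon>) .. p * (1 + \<epsilon>)} y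
                  / measure lborel {p * (1 - \<epsilon>) .. p * (1 + \<epsilon>)})"
    interpret prob_space M by (rule PS)
    have Ym[measurable]: "Y \<in> borel_measurable M" using distributed_measurable[OF dist] by simp
    have Pm'[measurable]: "\<And>i. i < n \<Longrightarrow> (\<lambda>\<omega>. P \<omega> i) \<in> borel_measurable M" using Pm by auto
    have r1: "r < 1"
    proof -
      have "r \<le> 1 / sqrt \<theta>" using r by simp
      also have "1 / sqrt \<theta> < 1" using assms by simp
      finally show ?thesis .
    qed
    define A where "A = (\<lambda>\<omega>. A1 \<theta> r (map (P \<omega>) [0..<n]) (Y \<omega>))"
    have Am[measurable]: "A \<in> borel_measurable M"
    proof -
      have Tm: "(\<lambda>\<omega>. Phi1 \<theta> r (Y \<omega>)) \<in> borel_measurable M"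
        unfolding Phi1_def phi_r_def by measurable
      have eq: "A = (\<lambda>\<omega>. case find (\<lambda>q. Phi1 \<theta> r (Y \<omega>) \<le> q) (map (\<lambda>f. f \<omega>) (map (\<lambda>i \<omega>. P \<omega> i) [0..<n])) of Some q \<Rightarrow> q | None \<Rightarrow> 1)"
        unfolding A_def A1_def by (simp add: comp_def)
      show ?thesis unfolding eq by (rule find_meas[OF Tm]) (use Pm in auto)
    qed
    have Abnd: "1 \<le> A \<omega> \<and> A \<omega> \<le> \<theta>" if "\<omega> \<in> space M" for \<omega>
      unfolding A_def using A1_ge1[of r \<theta>] A1_le[of "map (P \<omega>) [0..<n]" \<theta> r] Pr that x1 assms
      unfolding x_def by auto
    have Aint: "integrable M A"
    proof -
      have "AE \<omega> in M. norm (A \<omega>) \<le> \<theta>"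
      proof (rule AE_I2)
        fix \<omega> assume "\<omega> \<in> space M"
        then show "norm (A \<omega>) \<le> \<theta>" using Abnd[of \<omega>] by simp
      qed
      then show ?thesis by (rule integrable_const_bound) (rule Am)
    qed
    have Maxm: "(\<lambda>\<omega>. Max ((P \<omega>) ` {..<n})) \<in> borel_measurable M"
      using borel_measurable_Max[of "{..<n}" "\<lambda>i \<omega>. P \<omega> i" M] Pm by auto
    have den: "(\<integral>\<omega>. Max ((P \<omega>) ` {..<n}) \<partial>M) = p"
    proof -
      have "(\<integral>\<omega>. Max ((P \<omega>) ` {..<n}) \<partial>M) = (\<integral>\<omega>. p \<partial>M)"
        by (rule integral_cong_AE[OF Maxm _ AEm]) simp
      then show ?thesis by (simp add: prob_space)
    qed
    have p1: "1 \<le> p" and p2: "p \<le> \<theta>" using p by auto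
    have goal: "1 / x * (1 - s / 2 * \<epsilon> - \<epsilon>^2) \<le> (\<integral>\<omega>. A \<omega> \<partial>M) / p"
    proof (cases "p \<le> x")
      case True
      have "1 \<le> (\<integral>\<omega>. A \<omega> \<partial>M)"
      proof -
        have "(\<integral>\<omega>. 1 \<partial>M) \<le> (\<integral>\<omega>. A \<omega> \<partial>M)"
          by (rule integral_mono_AE[OF _ Aint]) (use Abnd in auto)
        then show ?thesis by (simp add: prob_space)
      qed
      then have "1 / p \<le> (\<integral>\<omega>. A \<omega> \<partial>M) / p" using p1 by (simp add: divide_right_mono)
      moreover have "1 / x \<le> 1 / p" using True p1 by (simp add: frac_le)
      moreover have "1 / x * (1 - s / 2 * \<epsilon> - \<epsilon>^2) \<le> 1 / x * 1"
      proof (rule mult_left_mono)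
        have "0 \<le> s / 2 * \<epsilon>" using s0 e0 by simp
        moreover have "0 \<le> \<epsilon>^2" by simp
        ultimately show "1 - s / 2 * \<epsilon> - \<epsilon>^2 \<le> 1" by linarith
      qed (use x1 in simp)
      ultimately show ?thesis by linarith
    next
      case False
      have e1: "\<epsilon> \<le> 1 - 1/p" and e2: "\<epsilon> \<le> \<theta>/p - 1" using e12 by auto
      obtain c where ca: "p * (1 - \<epsilon>) \<le> c" and cb: "c \<le> p * (1 + \<epsilon>)"
        and cy: "\<forall>y\<le>c. Phi1 \<theta> r y \<le> p \<and> y / (r * \<theta>) \<le> Phi1 \<theta> r y"
        and cineq: "2 * p^2 * \<epsilon> * (1 - s * \<epsilon> / 2)
          \<le> (c^2 - (p * (1 - \<epsilon>))^2) / 2 + r * \<theta> * (p * (1 + \<epsilon>) - c)"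
      proof -
        have rp: "r * \<theta> < p" using False unfolding x_def by simp
        have "1 / \<theta> < r" "r \<le> 1 / sqrt \<theta>" using r by auto
        from core[OF assms this p1 p2 rp e0 e1 e2] show ?thesis using that unfolding s_def by blast
      qed
      define a where "a = p * (1 - \<epsilon>)"
      define b where "b = p * (1 + \<epsilon>)"
      have ab: "a < b" unfolding a_def b_def using p1 e0 by simp
      define G where "G = (\<lambda>y. if y \<le> c then y / x else (1::real))"
      have Gm[measurable]: "G \<in> borel_measurable borel" unfolding G_def by measurable
      have dens0: "\<And>y. 0 \<le> indicator {a..b} y / measure lborel {a..b}" using ab by simp
      have UI: "integrable lborel (\<lambda>y. (indicator {a..b} y / measure lborel {a..b}) * G y)"
        and UV: "(\<integral>y. (indicator {a..b} y / measure lborel {a..b}) * G y \<partial>lborel)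
          = ((c^2 - a^2) / (2 * x) + (b - c)) / (b - a)"
        using unif_int[OF ab _ _, of c x] ca cb x1 unfolding G_def a_def b_def by auto
      have dist': "distributed M lborel Y (\<lambda>y. indicator {a..b} y / measure lborel {a..b})"
        using dist unfolding a_def b_def .
      have GY: "(\<integral>\<omega>. G (Y \<omega>) \<partial>M) = ((c^2 - a^2) / (2 * x) + (b - c)) / (b - a)"
        using distributed_integral[OF dist', of G] dens0 UV by simp
      have GYi: "integrable M (\<lambda>\<omega>. G (Y \<omega>))"
        using distributed_integrable[OF dist', of G] dens0 UI by simp
      have pw: "AE \<omega> in M. G (Y \<omega>) \<le> A \<omega>"
        using AEm
      proof eventually_elim
        case (elim \<omega>)
        show ?case
        proof (cases "Y \<omega> \<le> c")
          case True
          have pin: "p \<in> set (map (P \<omega>) [0..<n])"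
          proof -
            have "Max ((P \<omega>) ` {..<n}) \<in> (P \<omega>) ` {..<n}" using n1 by (intro Max_in) (auto simp: lessThan_empty_iff)
            then show ?thesis using elim by auto
          qed
          have "Phi1 \<theta> r (Y \<omega>) \<le> A \<omega>" unfolding A_def
            using A1_ge_Phi[OF pin] cy True by auto
          moreover have "G (Y \<omega>) \<le> Phi1 \<theta> r (Y \<omega>)" unfolding G_def x_def using cy True by auto
          ultimately show ?thesis by linarith
        next
          case False
          then show ?thesis unfolding G_def A_def using A1_ge1[of r \<theta>] x1 x_def by auto
        qed
      qed
      have "(\<integral>\<omega>. G (Y \<omega>) \<partial>M) \<le> (\<integral>\<omega>. A \<omega> \<partial>M)"
        by (rule integral_mono_AE[OF GYi Aint pw])
      then have lb: "((c^2 - a^2) / (2 * x) + (b - c)) / (b - a) \<le> (\<integral>\<omega>. A \<omega> \<partial>M)" using GY by simp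
      have ba: "b - a = 2 * p * \<epsilon>" unfolding a_def b_def by (simp add: algebra_simps)
      have "1 / x * (1 - s / 2 * \<epsilon> - \<epsilon>^2) \<le> 1 / x * (1 - s * \<epsilon> / 2)"
      proof (rule mult_left_mono)
        have "0 \<le> \<epsilon>^2" by simp
        then show "1 - s / 2 * \<epsilon> - \<epsilon>^2 \<le> 1 - s * \<epsilon> / 2" by simp
      qed (use x1 in simp)
      also have "\<dots> = (2 * p^2 * \<epsilon> * (1 - s * \<epsilon> / 2)) / (x * (2 * p * \<epsilon>)) / p"
        using p1 e0 x1 by (simp add: field_simps power2_eq_square)
      also have "\<dots> \<le> ((c^2 - a^2) / 2 + x * (b - c)) / (x * (2 * p * \<epsilon>)) / p"
        using cineq p1 e0 x1 unfolding a_def b_def x_def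
        by (intro divide_right_mono) auto
      also have "((c^2 - a^2) / 2 + x * (b - c)) / (x * (2 * p * \<epsilon>)) = ((c^2 - a^2) / (2 * x) + (b - c)) / (b - a)"
        unfolding ba using x1 by (simp add: field_simps)
      also have "\<dots> / p \<le> (\<integral>\<omega>. A \<omega> \<partial>M) / p" using divide_right_mono[OF lb, of p] p1 by simp
      finally show ?thesis .
    qed
    show "1 / (r * \<theta>) * (1 - s / 2 * \<epsilon> - 1 * \<epsilon>^2) \<le>
          (\<integral>\<omega>. A1 \<theta> r (map (P \<omega>) [0..<n]) (Y \<omega>) \<partial>M) / (\<integral>\<omega>. Max ((P \<omega>) ` {..<n}) \<partial>M)"
      using goal unfolding den A_def x_def by simp
  qed
qed

end
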